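(* Let $\mathcal H$ be a complex Hilbert space of finite dimension $d$, let $A,B$ be Hermitian operators on $\mathcal H$, let $|\psi\rangle,|\phi\rangle$ be unit vectors, and let $\{|\phi\rangle,|\phi^\perp_1\rangle,\dots,|\phi^\perp_{d-1}\rangle\}$ be an orthonormal basis of $\mathcal H$. Assume $a:=\langle\Delta A\rangle^{\phi}_{\psi}\neq0$ and $b:=\langle\Delta B\rangle^{\phi}_{\psi}\neq 0$. For each choice of sign, set $$S_{\pm}=\sum_{k=1}^{d-1}\Big|\langle\psi|\big(\tfrac{A}{a}\pm i\tfrac{B}{b}\big)|\phi^\perp_k\rangle\Big|^2 .$$ Then, for each choice of sign, $$a\,b\,\Big(1-\tfrac12 S_{\pm}\Big)=\mp\Big(\tfrac{1}{2i}\langle\psi|[A,B]|\psi\rangle-\operatorname{Im}W_{AB}\Big),$$ so that, whenever $1-\tfrac12S_\pm\neq0$, $$\langle\Delta A\rangle^{\phi}_{\psi}\langle\Delta B\rangle^{\phi}_{\psi}=\frac{\mp\big(\frac{1}{2i}\langle\psi|[A,B]|\psi\rangle-\operatorname{Im}W_{AB}\big)}{1-\frac12 S_{\pm}},$$ where $W_{AB}=\langle\psi|A|\phi\rangle\langle\phi|B|\psi\rangle$.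
   Context: PPS standard deviation: for a Hermitian operator $A$ and unit vectors $|\psi\rangle,|\phi\rangle$, $\langle\Delta A\rangle^{\phi}_{\psi}:=\sqrt{\langle\psi|A^2|\psi\rangle-|\langle\phi|A|\psi\rangle|^2}$. $[A,B]=AB-BA$. *)

theory Defs
  imports "HOL-Analysis.Analysis"
begin

text \<open>The finite-dimensional complex Hilbert space is modelled as complex^'n
  (dimension d = CARD('n)), operators as complex matrices complex^'n^'n.\<close>

definition cinner :: "complex ^ 'n \<Rightarrow> complex ^ 'n \<Rightarrow> complex" where
  "cinner x y = (\<Sum>i\<in>UNIV. cnj (x $ i) * y $ i)"

definition hermitian_mat :: "complex ^ 'n ^ 'n \<Rightarrow> bool" where
  "hermitian_mat A \<longleftrightarrow> (\<forall>i j. A $ i $ j = cnj (A $ j $ i))"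

definition commutator :: "complex ^ 'n ^ 'n \<Rightarrow> complex ^ 'n ^ 'n \<Rightarrow> complex ^ 'n ^ 'n" where
  "commutator A B = A ** B - B ** A"

text \<open>PPS standard deviation: sqrt(<psi|A^2|psi> - |<phi|A|psi>|^2).
  For Hermitian A the quantity <psi|A^2|psi> is real; we take its real part.\<close>
definition pps_sd :: "complex ^ 'n ^ 'n \<Rightarrow> complex ^ 'n \<Rightarrow> complex ^ 'n \<Rightarrow> real" where
  "pps_sd A psi phi =
     sqrt (Re (cinner psi ((A ** A) *v psi)) - (cmod (cinner phi (A *v psi)))\<^sup>2)"

end

theory Submission
  imports Defs
begin

lemma cinner_cnj: "cnj (cinner x y) = cinner y x"
  by (simp add: cinner_def mult.commute)

lemma herm_adj: assumes "hermitian_mat A"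
  shows "cinner x (A *v y) = cinner (A *v x) y"
proof -
  have h: "cnj (A $ j $ i) = A $ i $ j" for i j using assms unfolding hermitian_mat_def by (metis complex_cnj_cnj)
  have "cinner x (A *v y) = (\<Sum>i\<in>UNIV. \<Sum>j\<in>UNIV. cnj (x$i) * A$i$j * y$j)"
    by (simp add: cinner_def matrix_vector_mult_def sum_distrib_left mult.assoc)
  also have "\<dots> = (\<Sum>j\<in>UNIV. \<Sum>i\<in>UNIV. cnj (x$i) * A$i$j * y$j)" by (rule sum.swap)
  also have "\<dots> = (\<Sum>j\<in>UNIV. (\<Sum>i\<in>UNIV. cnj (A$j$i * x$i)) * y$j)"
    by (simp add: sum_distrib_right sum_distrib_left h mult_ac)
  also have "\<dots> = cinner (A *v x) y"
    by (simp only: cinner_def matrix_vector_mult_def vec_lambda_beta cnj_sum)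
  finally show ?thesis .
qed

lemma cinner_diff_right: "cinner x (u - v) = cinner x u - cinner x v"
  by (simp add: cinner_def algebra_simps sum_subtractf)


lemma resol:
  fixes e :: "nat \<Rightarrow> complex^'n"
  assumes orth: "\<forall>j<CARD('n). \<forall>k<CARD('n). cinner (e j) (e k) = (if j=k then 1 else 0)"
  shows "(\<Sum>k<CARD('n). cinner u (e k) * cinner (e k) v) = cinner u v"
proof -
  obtain f :: "'n \<Rightarrow> nat" where f: "bij_betw f UNIV {0..<CARD('n)}"
    using ex_bij_betw_finite_nat[of "UNIV::'n set"] by auto
  have fr: "f i < CARD('n)" for i using f by (auto simp: bij_betw_def)
  have fi: "f i = f i' \<longleftrightarrow> i = i'" for i i' using f by (auto simp: bij_betw_def inj_on_def)
  define U :: "complex^'n^'n" where "U = (\<chi> i j. cnj (e (f i) $ j))"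
  define V :: "complex^'n^'n" where "V = (\<chi> i j. e (f j) $ i)"
  have "U ** V = mat 1"
  proof -
    have "(U ** V) $ i $ i' = mat 1 $ i $ i'" for i i'
    proof -
      have "(U ** V) $ i $ i' = cinner (e (f i)) (e (f i'))"
        by (simp add: U_def V_def matrix_matrix_mult_def cinner_def)
      also have "\<dots> = mat 1 $ i $ i'" using orth fr fi by (simp add: mat_def)
      finally show ?thesis .
    qed
    then show ?thesis by (simp add: vec_eq_iff)
  qed
  hence VU: "V ** U = mat 1" using matrix_left_right_inverse by blast
  have VUe: "(\<Sum>m\<in>UNIV. e (f m) $ i * cnj (e (f m) $ j)) = (if i = j then 1 else 0)" for i j
  proof -
    have "(V ** U) $ i $ j = (\<Sum>m\<in>UNIV. e (f m) $ i * cnj (e (f m) $ j))"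
      by (simp add: U_def V_def matrix_matrix_mult_def)
    then show ?thesis using VU by (simp add: mat_def)
  qed
  have "(\<Sum>k<CARD('n). cinner u (e k) * cinner (e k) v) = (\<Sum>m\<in>UNIV. cinner u (e (f m)) * cinner (e (f m)) v)"
    using sum.reindex_bij_betw[OF f, of "\<lambda>k. cinner u (e k) * cinner (e k) v"]
    by (simp add: lessThan_atLeast0)
  also have "\<dots> = (\<Sum>m\<in>UNIV. \<Sum>i\<in>UNIV. \<Sum>j\<in>UNIV. cnj (u$i) * v$j * (e (f m) $ i * cnj (e (f m) $ j)))"
    apply (simp add: cinner_def sum_product algebra_simps)
    by (rule sum.cong[OF refl], rule sum.swap)
  also have "\<dots> = (\<Sum>i\<in>UNIV. \<Sum>m\<in>UNIV. \<Sum>j\<in>UNIV. cnj (u$i) * v$j * (e (f m) $ i * cnj (e (f m) $ j)))"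
    by (rule sum.swap)
  also have "\<dots> = (\<Sum>i\<in>UNIV. \<Sum>j\<in>UNIV. \<Sum>m\<in>UNIV. cnj (u$i) * v$j * (e (f m) $ i * cnj (e (f m) $ j)))"
    by (rule sum.cong[OF refl], rule sum.swap)
  also have "\<dots> = (\<Sum>i\<in>UNIV. \<Sum>j\<in>UNIV. cnj (u$i) * v$j * (if i = j then 1 else 0))"
    by (simp only: sum_distrib_left[symmetric] VUe)
  also have "\<dots> = (\<Sum>i\<in>UNIV. \<Sum>j\<in>UNIV. if i = j then cnj (u$i) * v$j else 0)"
    by (rule sum.cong[OF refl], rule sum.cong[OF refl], simp)
  also have "\<dots> = cinner u v"
    by (simp add: cinner_def)
  finally show ?thesis .
qed

lemma complex_sq_norm: "complex_of_real ((cmod z)\<^sup>2) = z * cnj z"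
  by (rule complex_norm_square)

lemma key:
  fixes A B :: "complex ^ 'n ^ 'n"
    and psi phi :: "complex ^ 'n"
    and perp :: "nat \<Rightarrow> complex ^ 'n"
    and s :: real
  assumes hA: "hermitian_mat A" and hB: "hermitian_mat B"
    and phi_unit: "cinner phi phi = 1"
    and perp_unit: "\<forall>k\<in>{1..CARD('n) - 1}. cinner (perp k) (perp k) = 1"
    and perp_phi: "\<forall>k\<in>{1..CARD('n) - 1}. cinner phi (perp k) = 0"
    and perp_orth: "\<forall>j\<in>{1..CARD('n) - 1}. \<forall>k\<in>{1..CARD('n) - 1}. j \<noteq> k \<longrightarrow> cinner (perp j) (perp k) = 0"
    and a_nz: "a \<noteq> 0" and b_nz: "b \<noteq> 0"
    and s_sign: "s = 1 \<or> s = -1"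
    and a_def: "a = pps_sd A psi phi" and b_def: "b = pps_sd B psi phi"
    and T_def: "T = (\<chi> i j. A $ i $ j / complex_of_real a + complex_of_real s * \<i> * B $ i $ j / complex_of_real b)"
    and S_def: "S = (\<Sum>k=1..CARD('n) - 1. (cmod (cinner psi (T *v perp k)))\<^sup>2)"
    and W_def: "W = cinner psi (A *v phi) * cinner phi (B *v psi)"
    and R_def: "R = - complex_of_real s * (1 / (2 * \<i>) * cinner psi (commutator A B *v psi) - complex_of_real (Im W))"
  shows "complex_of_real (a * b * (1 - S / 2)) = R"
proof -
  define d where "d = CARD('n)"
  have d1: "d \<ge> 1" unfolding d_def by (simp add: Suc_leI)
  define e where "e k = (if k = 0 then phi else perp k)" for k
  have orth: "\<forall>j<CARD('n). \<forall>k<CARD('n). cinner (e j) (e k) = (if j=k then 1 else 0)"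
  proof (intro allI impI)
    fix j k assume "j < CARD('n)" "k < CARD('n)"
    then show "cinner (e j) (e k) = (if j=k then 1 else 0)"
      using phi_unit perp_unit perp_phi perp_orth cinner_cnj[of phi "perp j"]
      by (auto simp: e_def)
  qed
  have R1: "(\<Sum>k=1..d-1. cinner u (perp k) * cinner (perp k) v) = cinner u v - cinner u phi * cinner phi v" for u v
  proof -
    have "{..<d} = insert 0 {1..d-1}" using d1 by auto
    then have "(\<Sum>k<d. cinner u (e k) * cinner (e k) v) = cinner u phi * cinner phi v + (\<Sum>k=1..d-1. cinner u (perp k) * cinner (perp k) v)"
      by (simp add: e_def)
    moreover have "(\<Sum>k<d. cinner u (e k) * cinner (e k) v) = cinner u v"
      unfolding d_def by (rule resol[OF orth])
    ultimately show ?thesis by simp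
  qed
  define p where "p = A *v psi"
  define q where "q = B *v psi"
  define \<alpha> where "\<alpha> = complex_of_real (1/a)"
  define \<beta> where "\<beta> = complex_of_real s * \<i> / complex_of_real b"
  have Te: "cinner psi (T *v v) = \<alpha> * cinner p v + \<beta> * cinner q v" for v
  proof -
    have "cinner psi (T *v v) = \<alpha> * cinner psi (A *v v) + \<beta> * cinner psi (B *v v)"
      unfolding T_def \<alpha>_def \<beta>_def
      by (simp add: cinner_def matrix_vector_mult_def sum_distrib_left sum.distrib[symmetric] algebra_simps divide_inverse)
    then show ?thesis using herm_adj[OF hA] herm_adj[OF hB] by (simp add: p_def q_def)
  qed
  have Sc: "complex_of_real S = \<alpha> * cnj \<alpha> * (cinner p p - cinner p phi * cinner phi p)
     + \<alpha> * cnj \<beta> * (cinner p q - cinner p phi * cinner phi q)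
     + \<beta> * cnj \<alpha> * (cinner q p - cinner q phi * cinner phi p)
     + \<beta> * cnj \<beta> * (cinner q q - cinner q phi * cinner phi q)"
  proof -
    have "complex_of_real S = (\<Sum>k=1..d-1. (\<alpha> * cinner p (perp k) + \<beta> * cinner q (perp k)) * (cnj \<alpha> * cinner (perp k) p + cnj \<beta> * cinner (perp k) q))"
      unfolding S_def d_def of_real_sum complex_sq_norm Te
      by (simp add: cinner_cnj)
    also have "\<dots> = \<alpha> * cnj \<alpha> * (\<Sum>k=1..d-1. cinner p (perp k) * cinner (perp k) p)
     + \<alpha> * cnj \<beta> * (\<Sum>k=1..d-1. cinner p (perp k) * cinner (perp k) q)
     + \<beta> * cnj \<alpha> * (\<Sum>k=1..d-1. cinner q (perp k) * cinner (perp k) p)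
     + \<beta> * cnj \<beta> * (\<Sum>k=1..d-1. cinner q (perp k) * cinner (perp k) q)"
      by (simp add: sum_distrib_left sum.distrib algebra_simps)
    finally show ?thesis by (simp only: R1)
  qed
  have ccp: "cinner phi p = cnj (cinner p phi)" "cinner phi q = cnj (cinner q phi)" "cinner q p = cnj (cinner p q)"
    by (simp_all add: cinner_cnj)
  have gen: "\<exists>N\<ge>0. cinner u u - cinner u phi * cinner phi u = complex_of_real N
      \<and> Re (cinner u u) - (cmod (cinner phi u))\<^sup>2 = N" for u
  proof -
    define N where "N = (\<Sum>k=1..d-1. (cmod (cinner u (perp k)))\<^sup>2)"
    have 1: "complex_of_real N = cinner u u - cinner u phi * cinner phi u"
      unfolding N_def of_real_sum complex_norm_square R1[symmetric]
      by (simp add: cinner_cnj)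
    have 2: "cinner u phi * cinner phi u = complex_of_real ((cmod (cinner phi u))\<^sup>2)"
      by (subst complex_norm_square) (simp add: cinner_cnj mult.commute)
    have "Re (cinner u u) - (cmod (cinner phi u))\<^sup>2 = Re (cinner u u - cinner u phi * cinner phi u)"
      by (simp only: 2 minus_complex.sel Re_complex_of_real)
    then have "Re (cinner u u) - (cmod (cinner phi u))\<^sup>2 = N" using 1
      by (metis Re_complex_of_real)
    moreover have "N \<ge> 0" unfolding N_def by (simp add: sum_nonneg)
    ultimately show ?thesis using 1 by auto
  qed
  have AA: "cinner psi ((X ** X) *v psi) = cinner (X *v psi) (X *v psi)" if "hermitian_mat X" for X
    using herm_adj[OF that] by (simp add: matrix_vector_mul_assoc[symmetric])
  have Pa: "cinner p p - cinner p phi * cinner phi p = complex_of_real (a^2)"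
  proof -
    obtain N where N: "N \<ge> 0" "cinner p p - cinner p phi * cinner phi p = complex_of_real N"
      "Re (cinner p p) - (cmod (cinner phi p))\<^sup>2 = N" using gen[of p] by blast
    have "a = sqrt N" unfolding a_def pps_sd_def AA[OF hA] p_def[symmetric] using N(3) by simp
    then show ?thesis using N by simp
  qed
  have Qb: "cinner q q - cinner q phi * cinner phi q = complex_of_real (b^2)"
  proof -
    obtain N where N: "N \<ge> 0" "cinner q q - cinner q phi * cinner phi q = complex_of_real N"
      "Re (cinner q q) - (cmod (cinner phi q))\<^sup>2 = N" using gen[of q] by blast
    have "b = sqrt N" unfolding b_def pps_sd_def AA[OF hB] q_def[symmetric] using N(3) by simp
    then show ?thesis using N by simp
  qed
  have Cm: "cinner psi (commutator A B *v psi) = cinner p q - cinner q p"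
    unfolding commutator_def matrix_vector_mult_diff_rdistrib cinner_diff_right
      matrix_vector_mul_assoc[symmetric] p_def q_def
    using herm_adj[OF hA] herm_adj[OF hB] by simp
  have Wx: "W = cinner p phi * cnj (cinner q phi)"
    unfolding W_def p_def q_def using herm_adj[OF hA, of psi phi] cinner_cnj[of "B *v psi" phi] by simp
  have ImW: "complex_of_real (Im W) = (W - cnj W) / (2 * \<i>)"
    by (subst complex_diff_cnj) (simp add: field_simps)
  have ca: "cnj \<alpha> = \<alpha>" "cnj \<beta> = - \<beta>" unfolding \<alpha>_def \<beta>_def by simp_all
  define Z where "Z = cinner p q"
  define x where "x = cinner p phi"
  define y where "y = cinner q phi"
  have Sc2: "complex_of_real S = \<alpha> * \<alpha> * complex_of_real (a^2) - \<alpha> * \<beta> * (Z - x * cnj y)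
     + \<beta> * \<alpha> * (cnj Z - y * cnj x) - \<beta> * \<beta> * complex_of_real (b^2)"
    using Sc Pa Qb unfolding ca ccp Z_def[symmetric] x_def[symmetric] y_def[symmetric] by simp
  have R2: "R = - complex_of_real s * (1 / (2 * \<i>) * (Z - cnj Z) - (x * cnj y - cnj x * y) / (2 * \<i>))"
    unfolding R_def ImW unfolding Cm Wx ccp Z_def x_def y_def by (simp only: complex_cnj_mult complex_cnj_cnj mult.commute)
  have s2: "s * s = 1" using s_sign by auto
  have h1: "\<alpha> * \<alpha> * complex_of_real (a^2) = 1"
    unfolding \<alpha>_def using a_nz by (simp add: power2_eq_square)
  have h2: "\<beta> * \<beta> * complex_of_real (b^2) = -1"
  proof -
    have "complex_of_real s * complex_of_real s = 1" using s2 by (metis of_real_1 of_real_mult)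
    then show ?thesis unfolding \<beta>_def using b_nz by (simp add: power2_eq_square field_simps)
  qed
  have h3: "complex_of_real a * complex_of_real b * (\<alpha> * \<beta>) = \<i> * complex_of_real s"
    unfolding \<alpha>_def \<beta>_def using a_nz b_nz by simp
  define X where "X = Z - x * cnj y"
  define Y where "Y = cnj Z - y * cnj x"
  have hS: "complex_of_real S = 2 - \<alpha> * \<beta> * (X - Y)"
    unfolding Sc2 h1 h2 X_def[symmetric] Y_def[symmetric] by (simp add: algebra_simps)
  have "complex_of_real (a * b * (1 - S / 2)) = complex_of_real a * complex_of_real b * (\<alpha> * \<beta>) * (X - Y) / 2"
    unfolding of_real_mult of_real_diff of_real_divide of_real_1 of_real_numeral hS by (simp add: field_simps)
  also have "\<dots> = \<i> * complex_of_real s * (X - Y) / 2" unfolding h3 ..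
  also have "\<dots> = R"
  proof -
    have hXY: "X - Y = (Z - cnj Z) - (x * cnj y - cnj x * y)" unfolding X_def Y_def by (simp add: algebra_simps)
    show ?thesis unfolding R2 hXY by (simp add: field_simps)
  qed
  finally show ?thesis .
qed

theorem theorem2:
  fixes A B :: "complex ^ 'n ^ 'n"
    and psi phi :: "complex ^ 'n"
    and perp :: "nat \<Rightarrow> complex ^ 'n"
    and s :: real
  assumes hA: "hermitian_mat A" and hB: "hermitian_mat B"
    and psi_unit: "cinner psi psi = 1" and phi_unit: "cinner phi phi = 1"
    and perp_unit: "\<forall>k\<in>{1..CARD('n) - 1}. cinner (perp k) (perp k) = 1"
    and perp_phi: "\<forall>k\<in>{1..CARD('n) - 1}. cinner phi (perp k) = 0"
    and perp_orth: "\<forall>j\<in>{1..CARD('n) - 1}. \<forall>k\<in>{1..CARD('n) - 1}. j \<noteq> k \<longrightarrow> cinner (perp j) (perp k) = 0"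
    and a_nz: "pps_sd A psi phi \<noteq> 0" and b_nz: "pps_sd B psi phi \<noteq> 0"
    and s_sign: "s = 1 \<or> s = -1"
  shows "let a = pps_sd A psi phi; b = pps_sd B psi phi;
             T = (\<chi> i j. A $ i $ j / complex_of_real a + complex_of_real s * \<i> * B $ i $ j / complex_of_real b);
             S = (\<Sum>k=1..CARD('n) - 1. (cmod (cinner psi (T *v perp k)))\<^sup>2);
             W = cinner psi (A *v phi) * cinner phi (B *v psi);
             R = - complex_of_real s * (1 / (2 * \<i>) * cinner psi (commutator A B *v psi) - complex_of_real (Im W))
         in complex_of_real (a * b * (1 - S / 2)) = R
            \<and> (1 - S / 2 \<noteq> 0 \<longrightarrow> complex_of_real (a * b) = R / complex_of_real (1 - S / 2))"
proof -
  define a where "a = pps_sd A psi phi"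
  define b where "b = pps_sd B psi phi"
  define T where "T = (\<chi> i j. A $ i $ j / complex_of_real a + complex_of_real s * \<i> * B $ i $ j / complex_of_real b)"
  define S where "S = (\<Sum>k=1..CARD('n) - 1. (cmod (cinner psi (T *v perp k)))\<^sup>2)"
  define W where "W = cinner psi (A *v phi) * cinner phi (B *v psi)"
  define R where "R = - complex_of_real s * (1 / (2 * \<i>) * cinner psi (commutator A B *v psi) - complex_of_real (Im W))"
  have k: "complex_of_real (a * b * (1 - S / 2)) = R"
    by (rule key[OF hA hB phi_unit perp_unit perp_phi perp_orth _ _ s_sign a_def b_def T_def S_def W_def R_def])
       (use a_nz b_nz a_def b_def in auto)
  have k2: "1 - S / 2 \<noteq> 0 \<longrightarrow> complex_of_real (a * b) = R / complex_of_real (1 - S / 2)"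
  proof
    assume h: "1 - S / 2 \<noteq> 0"
    have c: "complex_of_real (1 - S / 2) \<noteq> 0" using h by (simp only: of_real_eq_0_iff not_False_eq_True)
    have "R = complex_of_real (a * b) * complex_of_real (1 - S / 2)"
      using k by (simp only: of_real_mult)
    then show "complex_of_real (a * b) = R / complex_of_real (1 - S / 2)"
      using c by (metis nonzero_mult_div_cancel_right)
  qed
  show ?thesis
    unfolding Let_def a_def[symmetric] b_def[symmetric] T_def[symmetric] S_def[symmetric]
      W_def[symmetric] R_def[symmetric]
    using k k2 by blast
qed

end
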